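(* Let $A=\{(x_k,y_k):k\in[\ell]\}\subset\mathbb N^d$, $d=m+n$. Then for all $\bar k\in[\ell]$, $$\mathbb D_{\mathrm{in}}(x_{\bar k},y_{\bar k},T_F(A))\in\mathbb N\quad\text{and}\quad\mathbb D_{\mathrm{out}}(x_{\bar k},y_{\bar k},T_F(A))\in\mathbb N.$$
   Context: $\mathbb N$ is the set of non-negative integers; $[\ell]=\{1,\dots,\ell\}$; $K=\mathbb{R}_+^m\times(-\mathbb{R}_+^n)$. The free disposal hull (FDH) technology is $T_F(A)=(A+K)\cap\mathbb{R}_+^d$. Translation distance functions: $\mathbb D_{\mathrm{in}}(x,y,T)=\sup\{\delta\in\mathbb{R}:(x-\delta1\!\!1_m,y)\in T\}$, $\mathbb D_{\mathrm{out}}(x,y,T)=\sup\{\delta\in\mathbb{R}:(x,y+\delta1\!\!1_n)\in T\}$, where $1\!\!1$ denotes a vector of ones. *)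

theory Defs
  imports "HOL-Analysis.Analysis"
begin

text \<open>Points of R^d with d = m + n are pairs (x,y), x :: real^'m (inputs), y :: real^'n (outputs).\<close>

definition ones :: "real ^ 'a" where
  "ones = (\<chi> i. 1)"

definition cone_K :: "((real ^ 'm) \<times> (real ^ 'n)) set" where
  "cone_K = {(u, v). (\<forall>i. 0 \<le> u $ i) \<and> (\<forall>j. v $ j \<le> 0)}"

definition nonneg_orthant :: "((real ^ 'm) \<times> (real ^ 'n)) set" where
  "nonneg_orthant = {(x, y). (\<forall>i. 0 \<le> x $ i) \<and> (\<forall>j. 0 \<le> y $ j)}"

definition FDH :: "((real ^ 'm) \<times> (real ^ 'n)) set \<Rightarrow> ((real ^ 'm) \<times> (real ^ 'n)) set" where
  "FDH A = {a + c | a c. a \<in> A \<and> c \<in> cone_K} \<inter> nonneg_orthant"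

definition D_in :: "real ^ 'm \<Rightarrow> real ^ 'n \<Rightarrow> ((real ^ 'm) \<times> (real ^ 'n)) set \<Rightarrow> real" where
  "D_in x y T = Sup {\<delta>. (x - \<delta> *\<^sub>R ones, y) \<in> T}"

definition D_out :: "real ^ 'm \<Rightarrow> real ^ 'n \<Rightarrow> ((real ^ 'm) \<times> (real ^ 'n)) set \<Rightarrow> real" where
  "D_out x y T = Sup {\<delta>. (x, y + \<delta> *\<^sub>R ones) \<in> T}"

end

theory Submission
  imports Defs
begin

lemma abstract_sup:
  fixes S :: "real set" and c :: "nat \<Rightarrow> real"
  assumes F: "finite F" "kb \<in> F" and ci: "\<And>k. k \<in> F \<Longrightarrow> c k \<in> \<int>" and c0: "c kb = 0"
    and sub: "\<And>d. d \<in> S \<Longrightarrow> \<exists>k\<in>F. d \<le> c k"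
    and mem: "\<And>k. k \<in> F \<Longrightarrow> c k \<ge> 0 \<Longrightarrow> c k \<in> S"
  shows "Sup S \<in> \<nat>"
proof -
  define M where "M = Max (c ` F)"
  have MF: "M \<in> c ` F" unfolding M_def using F by (intro Max_in) auto
  have Mge: "\<And>k. k \<in> F \<Longrightarrow> c k \<le> M" unfolding M_def using F by auto
  have M0: "M \<ge> 0" using Mge[OF F(2)] c0 by simp
  have MS: "M \<in> S" using MF M0 mem by auto
  have "Sup S = M"
  proof (rule cSup_eq_maximum[OF MS])
    fix d assume "d \<in> S" then obtain k where "k \<in> F" "d \<le> c k" using sub by blast
    then show "d \<le> M" using Mge[of k] by simp
  qed
  moreover have "M \<in> \<int>" using MF ci by auto
  then obtain z where z: "M = of_int z" by (auto elim: Ints_cases)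
  then have "z \<ge> 0" using M0 by simp
  then have "M = of_nat (nat z)" using z by simp
  ultimately show ?thesis by simp
qed

lemma Min_int:
  fixes f :: "'a::finite \<Rightarrow> real"
  assumes "\<And>i. f i \<in> \<int>"
  shows "Min (range f) \<in> \<int>"
proof -
  have "Min (range f) \<in> range f" by (intro Min_in) auto
  then obtain i where "Min (range f) = f i" by blast
  then show ?thesis using assms by simp
qed

lemma Min_ge:
  fixes f :: "'a::finite \<Rightarrow> real"
  shows "(d \<le> Min (range f)) = (\<forall>i. d \<le> f i)"
  by (subst Min_ge_iff) auto

lemma FDH_mem:
  "((p, q) \<in> FDH ((\<lambda>k. (xs k, ys k)) ` K)) =
   ((\<exists>k\<in>K. (\<forall>i. xs k $ i \<le> p $ i) \<and> (\<forall>j. q $ j \<le> ys k $ j)) \<and> (\<forall>i. 0 \<le> p $ i) \<and> (\<forall>j. 0 \<le> q $ j))"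
proof
  assume "(p, q) \<in> FDH ((\<lambda>k. (xs k, ys k)) ` K)"
  then show "(\<exists>k\<in>K. (\<forall>i. xs k $ i \<le> p $ i) \<and> (\<forall>j. q $ j \<le> ys k $ j)) \<and> (\<forall>i. 0 \<le> p $ i) \<and> (\<forall>j. 0 \<le> q $ j)"
    unfolding FDH_def cone_K_def nonneg_orthant_def apply auto
    subgoal for aa ba k by (rule bexI[of _ k]) auto
    done
next
  assume h: "(\<exists>k\<in>K. (\<forall>i. xs k $ i \<le> p $ i) \<and> (\<forall>j. q $ j \<le> ys k $ j)) \<and> (\<forall>i. 0 \<le> p $ i) \<and> (\<forall>j. 0 \<le> q $ j)"
  then obtain k where k: "k \<in> K" "\<forall>i. xs k $ i \<le> p $ i" "\<forall>j. q $ j \<le> ys k $ j" by blast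
  have "(p, q) = (xs k, ys k) + (p - xs k, q - ys k)" by simp
  moreover have "(p - xs k, q - ys k) \<in> cone_K" using k unfolding cone_K_def by auto
  ultimately show "(p, q) \<in> FDH ((\<lambda>k. (xs k, ys k)) ` K)"
    using h k(1) unfolding FDH_def nonneg_orthant_def by blast
qed

theorem mainTheorem9:
  fixes l :: nat and xs :: "nat \<Rightarrow> real ^ 'm" and ys :: "nat \<Rightarrow> real ^ 'n" and kb :: nat
  assumes "\<And>k i. k \<in> {1..l} \<Longrightarrow> xs k $ i \<in> \<nat>"
      and "\<And>k j. k \<in> {1..l} \<Longrightarrow> ys k $ j \<in> \<nat>"
      and "kb \<in> {1..l}"
  shows "D_in (xs kb) (ys kb) (FDH ((\<lambda>k. (xs k, ys k)) ` {1..l})) \<in> \<nat>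
       \<and> D_out (xs kb) (ys kb) (FDH ((\<lambda>k. (xs k, ys k)) ` {1..l})) \<in> \<nat>"
proof
  have xn: "xs k $ i \<ge> 0" if "k \<in> {1..l}" for k i using assms(1)[of k i, OF that] by (auto elim!: Nats_cases)
  have yn: "ys k $ j \<ge> 0" if "k \<in> {1..l}" for k j using assms(2)[of k j, OF that] by (auto elim!: Nats_cases)
  have xi: "\<And>k i. k \<in> {1..l} \<Longrightarrow> xs k $ i \<in> \<int>" using assms(1) Nats_subset_Ints by blast
  have yi: "\<And>k j. k \<in> {1..l} \<Longrightarrow> ys k $ j \<in> \<int>" using assms(2) Nats_subset_Ints by blast
  show "D_in (xs kb) (ys kb) (FDH ((\<lambda>k. (xs k, ys k)) ` {1..l})) \<in> \<nat>"
    unfolding D_in_def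
  proof (rule abstract_sup[where F="{k\<in>{1..l}. \<forall>j. ys kb $ j \<le> ys k $ j}" and kb=kb
        and c="\<lambda>k. Min (range (\<lambda>i. xs kb $ i - xs k $ i))"])
    show "finite {k\<in>{1..l}. \<forall>j. ys kb $ j \<le> ys k $ j}" by simp
    show "kb \<in> {k\<in>{1..l}. \<forall>j. ys kb $ j \<le> ys k $ j}" using assms(3) by simp
    show "Min (range (\<lambda>i. xs kb $ i - xs k $ i)) \<in> \<int>" if "k \<in> {k\<in>{1..l}. \<forall>j. ys kb $ j \<le> ys k $ j}" for k
      using that xi assms(3) by (intro Min_int Ints_diff) auto
    show "Min (range (\<lambda>i. xs kb $ i - xs kb $ i)) = 0" by simp
    show "\<exists>k\<in>{k\<in>{1..l}. \<forall>j. ys kb $ j \<le> ys k $ j}. d \<le> Min (range (\<lambda>i. xs kb $ i - xs k $ i))"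
      if dS: "d \<in> {\<delta>. (xs kb - \<delta> *\<^sub>R ones, ys kb) \<in> FDH ((\<lambda>k. (xs k, ys k)) ` {1..l})}" for d
    proof -
      obtain k where k: "k \<in> {1..l}" "\<And>i. xs k $ i \<le> (xs kb - d *\<^sub>R ones) $ i" "\<And>j. ys kb $ j \<le> ys k $ j"
        using dS unfolding mem_Collect_eq FDH_mem by blast
      have "d \<le> Min (range (\<lambda>i. xs kb $ i - xs k $ i))" unfolding Min_ge
      proof
        fix i show "d \<le> xs kb $ i - xs k $ i" using k(2)[of i] by (simp add: ones_def)
      qed
      then show ?thesis using k by auto
    qed
    show "Min (range (\<lambda>i. xs kb $ i - xs k $ i)) \<in> {\<delta>. (xs kb - \<delta> *\<^sub>R ones, ys kb) \<in> FDH ((\<lambda>k. (xs k, ys k)) ` {1..l})}"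
      if "k \<in> {k\<in>{1..l}. \<forall>j. ys kb $ j \<le> ys k $ j}" "0 \<le> Min (range (\<lambda>i. xs kb $ i - xs k $ i))" for k
    proof -
      define c where "c = Min (range (\<lambda>i. xs kb $ i - xs k $ i))"
      have "c \<le> Min (range (\<lambda>i. xs kb $ i - xs k $ i))" unfolding c_def by simp
      then have c: "\<And>i. c \<le> xs kb $ i - xs k $ i" unfolding Min_ge by blast
      have k: "k \<in> {1..l}" "\<And>j. ys kb $ j \<le> ys k $ j" using that(1) by auto
      have "(xs kb - c *\<^sub>R ones, ys kb) \<in> FDH ((\<lambda>k. (xs k, ys k)) ` {1..l})"
        unfolding FDH_mem
      proof (intro conjI allI bexI[of _ k])
        fix i show "xs k $ i \<le> (xs kb - c *\<^sub>R ones) $ i" using c[of i] by (simp add: ones_def)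
        show "0 \<le> (xs kb - c *\<^sub>R ones) $ i" using c[of i] xn[OF k(1), of i] by (simp add: ones_def)
      next
        fix j show "ys kb $ j \<le> ys k $ j" by (rule k(2))
        show "0 \<le> ys kb $ j" using yn[OF assms(3)] by blast
      qed (rule k(1))
      then show ?thesis unfolding c_def by simp
    qed
  qed
  show "D_out (xs kb) (ys kb) (FDH ((\<lambda>k. (xs k, ys k)) ` {1..l})) \<in> \<nat>"
    unfolding D_out_def
  proof (rule abstract_sup[where F="{k\<in>{1..l}. \<forall>i. xs k $ i \<le> xs kb $ i}" and kb=kb
        and c="\<lambda>k. Min (range (\<lambda>j. ys k $ j - ys kb $ j))"])
    show "finite {k\<in>{1..l}. \<forall>i. xs k $ i \<le> xs kb $ i}" by simp
    show "kb \<in> {k\<in>{1..l}. \<forall>i. xs k $ i \<le> xs kb $ i}" using assms(3) by simp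
    show "Min (range (\<lambda>j. ys k $ j - ys kb $ j)) \<in> \<int>" if "k \<in> {k\<in>{1..l}. \<forall>i. xs k $ i \<le> xs kb $ i}" for k
      using that yi assms(3) by (intro Min_int Ints_diff) auto
    show "Min (range (\<lambda>j. ys kb $ j - ys kb $ j)) = 0" by simp
    show "\<exists>k\<in>{k\<in>{1..l}. \<forall>i. xs k $ i \<le> xs kb $ i}. d \<le> Min (range (\<lambda>j. ys k $ j - ys kb $ j))"
      if dS: "d \<in> {\<delta>. (xs kb, ys kb + \<delta> *\<^sub>R ones) \<in> FDH ((\<lambda>k. (xs k, ys k)) ` {1..l})}" for d
    proof -
      obtain k where k: "k \<in> {1..l}" "\<And>i. xs k $ i \<le> xs kb $ i" "\<And>j. ys kb $ j + d \<le> ys k $ j"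
        using dS unfolding mem_Collect_eq FDH_mem by (auto simp: ones_def)
      have "d \<le> Min (range (\<lambda>j. ys k $ j - ys kb $ j))" unfolding Min_ge
      proof
        fix j show "d \<le> ys k $ j - ys kb $ j" using k(3)[of j] by simp
      qed
      then show ?thesis using k by auto
    qed
    show "Min (range (\<lambda>j. ys k $ j - ys kb $ j)) \<in> {\<delta>. (xs kb, ys kb + \<delta> *\<^sub>R ones) \<in> FDH ((\<lambda>k. (xs k, ys k)) ` {1..l})}"
      if "k \<in> {k\<in>{1..l}. \<forall>i. xs k $ i \<le> xs kb $ i}" "0 \<le> Min (range (\<lambda>j. ys k $ j - ys kb $ j))" for k
    proof -
      define c where "c = Min (range (\<lambda>j. ys k $ j - ys kb $ j))"
      have "c \<le> Min (range (\<lambda>j. ys k $ j - ys kb $ j))" unfolding c_def by simp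
      then have c: "\<And>j. c \<le> ys k $ j - ys kb $ j" unfolding Min_ge by blast
      have c0: "0 \<le> c" using that(2) unfolding c_def .
      have k: "k \<in> {1..l}" "\<And>i. xs k $ i \<le> xs kb $ i" using that(1) by auto
      have "(xs kb, ys kb + c *\<^sub>R ones) \<in> FDH ((\<lambda>k. (xs k, ys k)) ` {1..l})"
        unfolding FDH_mem
      proof (intro conjI allI bexI[of _ k])
        fix i show "xs k $ i \<le> xs kb $ i" by (rule k(2))
        show "0 \<le> xs kb $ i" using xn[OF assms(3)] by blast
      next
        fix j show "(ys kb + c *\<^sub>R ones) $ j \<le> ys k $ j" using c[of j] by (simp add: ones_def)
        show "0 \<le> (ys kb + c *\<^sub>R ones) $ j" using c0 yn[OF assms(3), of j] by (simp add: ones_def)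
      qed (rule k(1))
      then show ?thesis unfolding c_def by simp
    qed
  qed
qed

end
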